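(* Let $n,k$ be positive integers with $2 \leq k \leq n-2$, and let $(\pi,\phi)$ be the decorated permutation of a positroid $M$ of rank $k$ on $[n]$. Then $M$ is sparse paving if and only if $\pi = \sigma_A (\pi_{k,n}^{top})$ for some non-adjacent $A \subseteq [n]$. In this case, $\pi$ has no fixed points (so $\phi$ is the empty function).
   Context: Positroids of rank $k$ on $[n]$: for $t\in[n]$ let $<_t$ be the order $t<_t t+1<_t\cdots<_t n<_t 1<_t\cdots<_t t-1$, extended to $k$-subsets componentwise after sorting. A Grassmann necklace is a sequence $(I_1,\dots,I_n)$ of $k$-subsets of $[n]$ with (indices mod $n$) $I_{i+1}=(I_i\setminus\{i\})\cup\{j\}$ for some $j$ if $i\in I_i$, and $I_{i+1}=I_i$ if $i\notin I_i$; its positroid has bases $\{J: I_t\leq_t J \text{ for all } t\}$, and $I_t$ is the $\leq_t$-minimal basis. A decorated permutation is a pair $(\pi,\phi)$ with $\pi$ a permutation of $[n]$ and $\phi$ a function from the fixed points of $\pi$ to $\{-1,1\}$. The decorated permutation of the positroid with necklace $(I_1,\dots,I_n)$ is: $\pi(i)=j$ if $I_{i+1}=(I_i\setminus\{i\})\cup\{j\}$ with $j\neq i$; $\pi(i)=i$, $\phi(i)=1$ if $I_{i+1}=I_i$ and $i\notin I_i$; $\pi(i)=i$, $\phi(i)=-1$ if $I_{i+1}=I_i$ and $i\in I_i$. $\pi_{k,n}^{top}$ is the permutation $i\mapsto i+k$ (mod $n$, representatives in $[n]$). For $i\in[n]$, $\sigma_i$ acts on permutations in one-line notation by exchanging the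 entries in positions $i$ and $i-1$, where $\sigma_1$ exchanges positions $1$ and $n$. A set $A\subseteq[n]$ is non-adjacent if $i\in A$ implies $i\pm1\notin A$ modulo $n$; for such $A$, $\sigma_A=\prod_{i\in A}\sigma_i$ (the factors commute). A rank-$k$ matroid is paving if every circuit has size at least $k$, and sparse paving if it and its dual are paving. *)

theory Defs
  imports Main
begin

definition cnext :: "nat \<Rightarrow> nat \<Rightarrow> nat" where
  "cnext n i = (if i = n then 1 else i + 1)"

definition cprev :: "nat \<Rightarrow> nat \<Rightarrow> nat" where
  "cprev n i = (if i = 1 then n else i - 1)"

text \<open>Position of x in the order <_t: t has rank 0, t+1 rank 1, ..., t-1 rank n-1.\<close>
definition trank :: "nat \<Rightarrow> nat \<Rightarrow> nat \<Rightarrow> nat" where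
  "trank n t x = (x + n - t) mod n"

definition tle :: "nat \<Rightarrow> nat \<Rightarrow> nat set \<Rightarrow> nat set \<Rightarrow> bool" where
  "tle n t I J =
     (let a = sorted_list_of_set (trank n t ` I); b = sorted_list_of_set (trank n t ` J)
      in length a = length b \<and> (\<forall>i < length a. a ! i \<le> b ! i))"

definition grassmann_necklace :: "nat \<Rightarrow> nat \<Rightarrow> (nat \<Rightarrow> nat set) \<Rightarrow> bool" where
  "grassmann_necklace n k I =
     (\<forall>i \<in> {1..n}. I i \<subseteq> {1..n} \<and> card (I i) = k \<and>
        (i \<in> I i \<longrightarrow> (\<exists>j \<in> {1..n}. I (cnext n i) = (I i - {i}) \<union> {j})) \<and>
        (i \<notin> I i \<longrightarrow> I (cnext n i) = I i))"

definition positroid_bases :: "nat \<Rightarrow> nat \<Rightarrow> (nat \<Rightarrow> nat set) \<Rightarrow> nat set set" where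
  "positroid_bases n k I =
     {J. J \<subseteq> {1..n} \<and> card J = k \<and> (\<forall>t \<in> {1..n}. tle n t (I t) J)}"

definition decperm_pi :: "nat \<Rightarrow> (nat \<Rightarrow> nat set) \<Rightarrow> nat \<Rightarrow> nat" where
  "decperm_pi n I i =
     (if i \<in> I i then (THE j. j \<in> I (cnext n i) \<and> I (cnext n i) = (I i - {i}) \<union> {j}) else i)"

definition decperm_phi :: "nat \<Rightarrow> (nat \<Rightarrow> nat set) \<Rightarrow> nat \<Rightarrow> int" where
  "decperm_phi n I i = (if i \<in> I i then -1 else 1)"

definition pi_top :: "nat \<Rightarrow> nat \<Rightarrow> nat \<Rightarrow> nat" where
  "pi_top k n i = (i + k - 1) mod n + 1"

definition nonadjacent :: "nat \<Rightarrow> nat set \<Rightarrow> bool" where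
  "nonadjacent n A =
     (A \<subseteq> {1..n} \<and> (\<forall>i \<in> A. cnext n i \<notin> A \<and> cprev n i \<notin> A))"

text \<open>sigma_A acting on a permutation w in one-line notation: for each i in A the entries in
  positions i and i-1 (cyclically; sigma_1 swaps positions 1 and n) are exchanged.
  For non-adjacent A these transpositions of positions are disjoint.\<close>
definition sigmaA :: "nat \<Rightarrow> nat set \<Rightarrow> (nat \<Rightarrow> nat) \<Rightarrow> nat \<Rightarrow> nat" where
  "sigmaA n A w p =
     w (if p \<in> A then cprev n p else if cnext n p \<in> A then cnext n p else p)"

definition m_indep :: "nat set set \<Rightarrow> nat set \<Rightarrow> bool" where
  "m_indep B X = (\<exists>b \<in> B. X \<subseteq> b)"

definition m_circuit :: "nat \<Rightarrow> nat set set \<Rightarrow> nat set \<Rightarrow> bool" where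
  "m_circuit n B C = (C \<subseteq> {1..n} \<and> \<not> m_indep B C \<and> (\<forall>x \<in> C. m_indep B (C - {x})))"

definition paving :: "nat \<Rightarrow> nat \<Rightarrow> nat set set \<Rightarrow> bool" where
  "paving n r B = (\<forall>C. m_circuit n B C \<longrightarrow> card C \<ge> r)"

definition dual_bases :: "nat \<Rightarrow> nat set set \<Rightarrow> nat set set" where
  "dual_bases n B = (\<lambda>b. {1..n} - b) ` B"

definition sparse_paving :: "nat \<Rightarrow> nat \<Rightarrow> nat set set \<Rightarrow> bool" where
  "sparse_paving n r B = (paving n r B \<and> paving n (n - r) (dual_bases n B))"

end

theory Submission
  imports Defs
begin

lemma sl1: "sorted_wrt (<) (l::nat list) \<Longrightarrow> i < length l \<Longrightarrow> i \<le> l!i"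
proof (induction i)
  case 0 show ?case by simp
next
  case (Suc i)
  have "l!i < l!Suc i" using Suc.prems by (simp add: sorted_wrt_nth_less)
  with Suc show ?case by simp
qed

lemma sl_mono: "sorted_wrt (<) (l::nat list) \<Longrightarrow> m \<le> i \<Longrightarrow> i < length l \<Longrightarrow> l!m \<le> l!i"
  by (metis le_less sorted_wrt_nth_less)

lemma sl2: "sorted_wrt (<) (l::nat list) \<Longrightarrow> {0..<j} \<subseteq> set l \<Longrightarrow> i < j \<Longrightarrow> i < length l \<and> l!i = i"
proof (induction i)
  case 0
  then obtain m where m: "m < length l" "l!m = 0" by (metis atLeastLessThan_iff in_set_conv_nth subset_iff zero_le)
  then have "l!0 \<le> l!m" using sl_mono[OF 0(1), of 0 m] by simp
  with m show ?case by auto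
next
  case (Suc i)
  then have ih: "i < length l" "l!i = i" by auto
  obtain m where m: "m < length l" "l!m = Suc i" using Suc.prems
    by (metis atLeastLessThan_iff in_set_conv_nth subset_iff zero_le)
  have "\<not> m \<le> i" using sl_mono[OF Suc.prems(1), of m i] ih m by auto
  then have "Suc i < length l" using m by auto
  moreover have "l!Suc i \<le> l!m" using sl_mono[OF Suc.prems(1), of "Suc i" m] m \<open>\<not> m \<le> i\<close> by auto
  moreover have "l!i < l!Suc i" using calculation Suc.prems by (simp add: sorted_wrt_nth_less)
  ultimately show ?case using ih m by auto
qed

abbreviation sl :: "nat set \<Rightarrow> nat list" where "sl X \<equiv> sorted_list_of_set X"

lemma G1:
  assumes "finite X" "finite Y" "card X = card Y" "\<forall>i<card X. sl X ! i \<le> sl Y ! i" "Y \<subseteq> {..m}"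
  shows "X \<subseteq> {..m}"
proof
  fix x assume "x \<in> X"
  then obtain i where i: "i < length (sl X)" "sl X ! i = x"
    by (metis assms(1) in_set_conv_nth set_sorted_list_of_set)
  have "sl Y ! i \<in> Y" using i assms by (metis length_sorted_list_of_set nth_mem set_sorted_list_of_set)
  have "i < card X" using i assms(1) by simp
  then have "sl X ! i \<le> sl Y ! i" using assms(4) by blast
  then show "x \<in> {..m}" using i assms(5) \<open>sl Y ! i \<in> Y\<close> by auto
qed

lemma G2:
  assumes "finite X" "finite Y" "card X = card Y" "\<forall>i<card X. sl X ! i \<le> sl Y ! i" "{0..<j} \<subseteq> Y"
  shows "{0..<j} \<subseteq> X"
proof
  fix r assume r: "r \<in> {0..<j}"
  have "r < length (sl Y) \<and> sl Y ! r = r"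
    using sl2[of "sl Y" j r] assms r by auto
  then have "r < card X" "sl X ! r \<le> r" using assms by auto
  moreover have "r \<le> sl X ! r" using sl1[of "sl X" r] calculation assms by auto
  ultimately have "sl X ! r = r" by auto
  then show "r \<in> X" using \<open>r < card X\<close> assms
    by (metis length_sorted_list_of_set nth_mem set_sorted_list_of_set)
qed

lemma G3:
  assumes "finite Y" "card Y = k"
  shows "\<forall>i<card {0..<k}. sl {0..<k} ! i \<le> sl Y ! i"
  using assms sl1[of "sl Y"] by (simp add: sorted_list_of_set_range)

lemma G4:
  assumes "finite Y" "card Y = k" "1 \<le> k"
    and fX: "finite X" and cX: "card X = k" and kX: "k \<in> X" and lX: "{0..<k-1} \<subseteq> X" and uX: "X \<subseteq> {..k}"
  shows "(\<forall>i<card X. sl X ! i \<le> sl Y ! i) \<longleftrightarrow> Y \<noteq> {0..<k}"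
proof
  assume h: "\<forall>i<card X. sl X ! i \<le> sl Y ! i"
  show "Y \<noteq> {0..<k}"
  proof
    assume Y: "Y = {0..<k}"
    have h2: "\<forall>i<card X. sl X ! i \<le> sl {0..<k} ! i" using h unfolding Y .
    have f2: "finite {0..<k}" by simp
    have c2: "card X = card {0..<k}" using cX by simp
    have s2: "{0..<k} \<subseteq> {..k-1}" by auto
    have "X \<subseteq> {..k-1}" by (rule G1[OF fX f2 c2 h2 s2])
    then show False using kX assms(3) by auto
  qed
next
  assume ne: "Y \<noteq> {0..<k}"
  have bk: "k \<le> sl Y ! (k-1)"
  proof (rule ccontr)
    assume nb: "\<not> k \<le> sl Y ! (k-1)"
    have "Y \<subseteq> {0..<k}"
    proof
      fix y assume "y \<in> Y"
      then obtain m where m: "m < length (sl Y)" "sl Y ! m = y"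
        by (metis assms(1) in_set_conv_nth set_sorted_list_of_set)
      have lk: "k - 1 < length (sl Y)" using assms by simp
      have "m \<le> k - 1" using m assms by simp
      then have "sl Y ! m \<le> sl Y ! (k-1)" using sl_mono[OF strict_sorted_list_of_set _ lk] by blast
      then show "y \<in> {0..<k}" using m nb by auto
    qed
    then have "Y = {0..<k}" using assms by (simp add: card_subset_eq)
    then show False using ne by simp
  qed
  show "\<forall>i<card X. sl X ! i \<le> sl Y ! i"
  proof (intro allI impI)
    fix i assume "i < card X"
    then have i: "i < k" using cX by simp
    have ss: "sorted_wrt (<) (sl X)" by (rule strict_sorted_list_of_set)
    have se: "set (sl X) = X" by (rule set_sorted_list_of_set[OF fX])
    have lenX: "length (sl X) = k" using cX by simp
    show "sl X ! i \<le> sl Y ! i"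
    proof (cases "i < k - 1")
      case True
      have "{0..<k-1} \<subseteq> set (sl X)" unfolding se by (rule lX)
      then have "i < length (sl X) \<and> sl X ! i = i" by (rule sl2[OF ss _ True])
      then have "sl X ! i = i" by blast
      moreover have "i \<le> sl Y ! i" using sl1[OF strict_sorted_list_of_set, of i Y] i assms by simp
      ultimately show ?thesis by simp
    next
      case False
      then have ik: "i = k - 1" using i by simp
      have "sl X ! i \<in> set (sl X)" using i lenX by simp
      then have "sl X ! i \<in> X" unfolding se .
      then have "sl X ! i \<le> k" using uX by auto
      with bk ik show ?thesis by simp
    qed
  qed
qed

definition rk :: "nat \<Rightarrow> nat \<Rightarrow> nat \<Rightarrow> nat" where
  "rk n t x = (if t \<le> x then x - t else x + n - t)"

lemma trank_rk: "t \<in> {1..n} \<Longrightarrow> x \<in> {1..n} \<Longrightarrow> trank n t x = rk n t x"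
proof -
  assume a: "t \<in> {1..n}" "x \<in> {1..n}"
  show ?thesis
  proof (cases "t \<le> x")
    case True
    then have e: "x + n - t = (x - t) + n" by auto
    have "(x + n - t) mod n = ((x - t) + n) mod n" by (simp only: e)
    also have "\<dots> = x - t"
    proof -
      have lt: "x - t < n" using a True by auto
      show ?thesis using lt by (metis mod_add_self2 mod_less)
    qed
    finally have c: "(x + n - t) mod n = x - t" .
    have "rk n t x = x - t" using True by (simp add: rk_def)
    moreover have "trank n t x = (x + n - t) mod n" by (simp add: trank_def)
    ultimately show ?thesis using c by metis
  next
    case False
    then show ?thesis using a by (simp add: trank_def rk_def)
  qed
qed

lemma trank_inj: "t \<in> {1..n} \<Longrightarrow> inj_on (trank n t) {1..n}"
proof -
  assume t: "t \<in> {1..n}"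
  have "inj_on (rk n t) {1..n}"
  proof (rule inj_onI)
    fix x y assume x: "x \<in> {1..n}" and y: "y \<in> {1..n}" and e: "rk n t x = rk n t y"
    show "x = y"
    proof (cases "t \<le> x")
      case True
      show ?thesis
      proof (cases "t \<le> y")
        case True
        then show ?thesis using \<open>t \<le> x\<close> e by (simp add: rk_def)
      next
        case False
        have "x - t = y + n - t" using e False \<open>t \<le> x\<close> by (simp add: rk_def)
        then show ?thesis using x y t False \<open>t \<le> x\<close> by auto
      qed
    next
      case False
      show ?thesis
      proof (cases "t \<le> y")
        case True
        have "x + n - t = y - t" using e \<open>\<not> t \<le> x\<close> \<open>t \<le> y\<close> by (simp add: rk_def)
        then show ?thesis using x y t \<open>\<not> t \<le> x\<close> \<open>t \<le> y\<close> by auto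
      next
        case False
        have "x + n - t = y + n - t" using e \<open>\<not> t \<le> x\<close> False by (simp add: rk_def)
        then show ?thesis using x y t \<open>\<not> t \<le> x\<close> False by auto
      qed
    qed
  qed
  moreover have "inj_on (trank n t) {1..n} = inj_on (rk n t) {1..n}"
    by (rule inj_on_cong) (rule trank_rk[OF t])
  ultimately show ?thesis by simp
qed

lemma trank_img_filter: "t \<in> {1..n} \<Longrightarrow> trank n t ` {x\<in>{1..n}. P (trank n t x)} = {r. r < n \<and> P r}"
proof -
  assume t: "t \<in> {1..n}"
  show ?thesis
  proof
    show "trank n t ` {x\<in>{1..n}. P (trank n t x)} \<subseteq> {r. r < n \<and> P r}"
      using t by (auto simp: trank_rk rk_def)
  next
    show "{r. r < n \<and> P r} \<subseteq> trank n t ` {x\<in>{1..n}. P (trank n t x)}"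
    proof
      fix r assume r: "r \<in> {r. r < n \<and> P r}"
      define x where "x = (if t + r \<le> n then t + r else t + r - n)"
      have x: "x \<in> {1..n}" using t r by (auto simp: x_def)
      have "trank n t x = r" using t r x by (auto simp: trank_rk rk_def x_def)
      then show "r \<in> trank n t ` {x\<in>{1..n}. P (trank n t x)}" using x r by force
    qed
  qed
qed

lemma trank_img: "t \<in> {1..n} \<Longrightarrow> trank n t ` {1..n} = {0..<n}"
proof -
  assume t: "t \<in> {1..n}"
  have h: "trank n t ` {x\<in>{1..n}. True} = {r. r < n \<and> True}" using trank_img_filter[OF t] .
  have "{x\<in>{1..n}. True} = {1..n}" by auto
  moreover have "{r. r < n \<and> True} = {0..<n}" by auto
  ultimately show ?thesis using h by simp
qed

definition Ivl :: "nat \<Rightarrow> nat \<Rightarrow> nat \<Rightarrow> nat set" where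
  "Ivl n k t = {x\<in>{1..n}. trank n t x < k}"
definition Alt :: "nat \<Rightarrow> nat \<Rightarrow> nat \<Rightarrow> nat set" where
  "Alt n k t = {x\<in>{1..n}. trank n t x < k - 1 \<or> trank n t x = k}"

lemma Ivl_img: "t \<in> {1..n} \<Longrightarrow> k \<le> n \<Longrightarrow> trank n t ` Ivl n k t = {0..<k}"
proof -
  assume a: "t \<in> {1..n}" "k \<le> n"
  have "trank n t ` Ivl n k t = {r. r < n \<and> r < k}" unfolding Ivl_def by (rule trank_img_filter[OF a(1)])
  also have "\<dots> = {0..<k}" using a(2) by auto
  finally show ?thesis .
qed

lemma Alt_img: "t \<in> {1..n} \<Longrightarrow> k < n \<Longrightarrow> trank n t ` Alt n k t = insert k {0..<k-1}"
proof -
  assume a: "t \<in> {1..n}" "k < n"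
  have "trank n t ` Alt n k t = {r. r < n \<and> (r < k - 1 \<or> r = k)}" unfolding Alt_def by (rule trank_img_filter[OF a(1)])
  also have "\<dots> = insert k {0..<k-1}" using a(2) by auto
  finally show ?thesis .
qed

lemma card_trank_img: "t \<in> {1..n} \<Longrightarrow> J \<subseteq> {1..n} \<Longrightarrow> card (trank n t ` J) = card J"
  by (rule card_image[OF inj_on_subset[OF trank_inj]])

lemma Ivl_sub: "Ivl n k t \<subseteq> {1..n}" by (auto simp: Ivl_def)
lemma Alt_sub: "Alt n k t \<subseteq> {1..n}" by (auto simp: Alt_def)

lemma card_Ivl: "t \<in> {1..n} \<Longrightarrow> k \<le> n \<Longrightarrow> card (Ivl n k t) = k"
proof -
  assume a: "t \<in> {1..n}" "k \<le> n"
  have "card (Ivl n k t) = card (trank n t ` Ivl n k t)" using card_trank_img[OF a(1) Ivl_sub] by simp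
  also have "\<dots> = k" using Ivl_img[OF a] by simp
  finally show ?thesis .
qed

lemma card_Alt: "t \<in> {1..n} \<Longrightarrow> k < n \<Longrightarrow> 1 \<le> k \<Longrightarrow> card (Alt n k t) = k"
proof -
  assume a: "t \<in> {1..n}" "k < n" "1 \<le> k"
  have "card (Alt n k t) = card (trank n t ` Alt n k t)" using card_trank_img[OF a(1) Alt_sub] by simp
  also have "\<dots> = k" using Alt_img[OF a(1,2)] a(3) by simp
  finally show ?thesis .
qed

lemma tle_unf: "tle n t I J = (card (trank n t ` I) = card (trank n t ` J) \<and>
   (\<forall>i<card (trank n t ` I). sl (trank n t ` I) ! i \<le> sl (trank n t ` J) ! i))"
  unfolding tle_def Let_def length_sorted_list_of_set ..

lemma tle_Ivl:
  assumes "t \<in> {1..n}" "k \<le> n" "J \<subseteq> {1..n}" "card J = k"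
  shows "tle n t (Ivl n k t) J"
proof -
  have fin: "finite (trank n t ` J)" by (rule finite_imageI[OF finite_subset[OF assms(3)]]) simp
  have c: "card (trank n t ` J) = k" using card_trank_img[OF assms(1,3)] assms(4) by simp
  show ?thesis
    unfolding tle_unf Ivl_img[OF assms(1,2)] using G3[OF fin c] c by simp
qed

lemma tle_Alt:
  assumes "t \<in> {1..n}" "k < n" "1 \<le> k" "J \<subseteq> {1..n}" "card J = k"
  shows "tle n t (Alt n k t) J \<longleftrightarrow> J \<noteq> Ivl n k t"
proof -
  have fin: "finite (trank n t ` J)" by (rule finite_imageI[OF finite_subset[OF assms(4)]]) simp
  have c: "card (trank n t ` J) = k" using card_trank_img[OF assms(1,4)] assms(5) by simp
  have "J = Ivl n k t \<longleftrightarrow> trank n t ` J = trank n t ` Ivl n k t"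
    using inj_on_image_eq_iff[OF trank_inj[OF assms(1)] assms(4) Ivl_sub] by simp
  also have "\<dots> \<longleftrightarrow> trank n t ` J = {0..<k}" using Ivl_img[OF assms(1)] assms(2) by simp
  finally have e: "J = Ivl n k t \<longleftrightarrow> trank n t ` J = {0..<k}" .
  define X where "X = insert k {0..<k-1}"
  define Y where "Y = trank n t ` J"
  have tX: "trank n t ` Alt n k t = X" using Alt_img[OF assms(1,2)] X_def by simp
  have cX: "card X = k" using assms(3) unfolding X_def by simp
  have cY: "card Y = k" using c unfolding Y_def .
  have "tle n t (Alt n k t) J \<longleftrightarrow> (\<forall>i<card X. sl X ! i \<le> sl Y ! i)"
    unfolding tle_unf tX Y_def[symmetric] using cX cY by simp
  also have "\<dots> \<longleftrightarrow> Y \<noteq> {0..<k}"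
    by (rule G4[OF _ cY assms(3)]) (use fin cX assms(3) in \<open>auto simp: X_def Y_def\<close>)
  also have "\<dots> \<longleftrightarrow> J \<noteq> Ivl n k t" by (simp only: Y_def e)
  finally show ?thesis .
qed

lemma tle_upper:
  assumes "t \<in> {1..n}" "tle n t I J" "I \<subseteq> {1..n}" "J \<subseteq> {1..n}" "J \<subseteq> {x\<in>{1..n}. trank n t x \<le> m}"
  shows "I \<subseteq> {x\<in>{1..n}. trank n t x \<le> m}"
proof -
  have sub: "trank n t ` J \<subseteq> {..m}" using assms(5) by auto
  have fI: "finite (trank n t ` I)" by (rule finite_imageI[OF finite_subset[OF assms(3)]]) simp
  have fJ: "finite (trank n t ` J)" by (rule finite_imageI[OF finite_subset[OF assms(4)]]) simp
  have tl: "card (trank n t ` I) = card (trank n t ` J)"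
    "\<forall>i<card (trank n t ` I). sl (trank n t ` I) ! i \<le> sl (trank n t ` J) ! i"
    using assms(2) unfolding tle_unf by blast+
  have h: "trank n t ` I \<subseteq> {..m}" by (rule G1[OF fI fJ tl sub])
  show ?thesis
  proof
    fix x assume x: "x \<in> I"
    then have "trank n t x \<le> m" using h by blast
    then show "x \<in> {x\<in>{1..n}. trank n t x \<le> m}" using x assms(3) by blast
  qed
qed

lemma tle_lower:
  assumes "t \<in> {1..n}" "tle n t I J" "I \<subseteq> {1..n}" "J \<subseteq> {1..n}" "{x\<in>{1..n}. trank n t x < j} \<subseteq> J" "j \<le> n"
  shows "{x\<in>{1..n}. trank n t x < j} \<subseteq> I"
proof -
  have "trank n t ` {x\<in>{1..n}. trank n t x < j} = {r. r < n \<and> r < j}"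
    by (rule trank_img_filter[OF assms(1)])
  also have "{r. r < n \<and> r < j} = {0..<j}" using assms(6) by auto
  finally have eq: "trank n t ` {x\<in>{1..n}. trank n t x < j} = {0..<j}" .
  have "trank n t ` {x\<in>{1..n}. trank n t x < j} \<subseteq> trank n t ` J" by (rule image_mono[OF assms(5)])
  then have s0: "{0..<j} \<subseteq> trank n t ` J" unfolding eq .
  have fI: "finite (trank n t ` I)" by (rule finite_imageI[OF finite_subset[OF assms(3)]]) simp
  have fJ: "finite (trank n t ` J)" by (rule finite_imageI[OF finite_subset[OF assms(4)]]) simp
  have tl: "card (trank n t ` I) = card (trank n t ` J)"
    "\<forall>i<card (trank n t ` I). sl (trank n t ` I) ! i \<le> sl (trank n t ` J) ! i"
    using assms(2) unfolding tle_unf by blast+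
  have sub: "{0..<j} \<subseteq> trank n t ` I" by (rule G2[OF fI fJ tl s0])
  show ?thesis
  proof
    fix x assume x: "x \<in> {x\<in>{1..n}. trank n t x < j}"
    then have "trank n t x \<in> {0..<j}" by simp
    then have "trank n t x \<in> trank n t ` I" by (rule subsetD[OF sub])
    then obtain y where y2: "trank n t x = trank n t y" and y1: "y \<in> I" by (rule imageE)
    have yn: "y \<in> {1..n}" by (rule subsetD[OF assms(3) y1])
    have xn: "x \<in> {1..n}" using x by simp
    have "x = y" by (rule inj_onD[OF trank_inj[OF assms(1)] y2 xn yn])
    then show "x \<in> I" using y1 by simp
  qed
qed

lemma mem_Ivl: "t \<in> {1..n} \<Longrightarrow> x \<in> Ivl n k t \<longleftrightarrow> (1 \<le> x \<and> x \<le> n \<and> rk n t x < k)"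
proof -
  assume t: "t \<in> {1..n}"
  show ?thesis
  proof (cases "x \<in> {1..n}")
    case True
    then show ?thesis using trank_rk[OF t True] by (simp add: Ivl_def)
  next
    case False
    then show ?thesis by (auto simp: Ivl_def)
  qed
qed

lemma mem_Alt: "t \<in> {1..n} \<Longrightarrow> x \<in> Alt n k t \<longleftrightarrow> (1 \<le> x \<and> x \<le> n \<and> (rk n t x < k - 1 \<or> rk n t x = k))"
proof -
  assume t: "t \<in> {1..n}"
  show ?thesis
  proof (cases "x \<in> {1..n}")
    case True
    then show ?thesis using trank_rk[OF t True] by (simp add: Alt_def)
  next
    case False
    then show ?thesis by (auto simp: Alt_def)
  qed
qed

lemma pt_eq: "i \<in> {1..n} \<Longrightarrow> k < n \<Longrightarrow> pi_top k n i = (if i + k \<le> n then i + k else i + k - n)"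
proof -
  assume a: "i \<in> {1..n}" "k < n"
  show ?thesis
  proof (cases "i + k \<le> n")
    case True
    then have "(i + k - 1) mod n = i + k - 1" using a by simp
    then show ?thesis using True a by (simp add: pi_top_def)
  next
    case False
    have ge: "n \<le> i + k - 1" using False by simp
    have lt: "i + k - 1 - n < n" using a False by simp
    have "(i + k - 1) mod n = (i + k - 1 - n) mod n" by (rule le_mod_geq[OF ge])
    also have "\<dots> = i + k - 1 - n" by (rule mod_less[OF lt])
    finally have "(i + k - 1) mod n = i + k - 1 - n" .
    then show ?thesis using False a by (simp add: pi_top_def)
  qed
qed

lemma cnext_in: "t \<in> {1..n} \<Longrightarrow> cnext n t \<in> {1..n}" by (auto simp: cnext_def)
lemma cprev_in: "t \<in> {1..n} \<Longrightarrow> cprev n t \<in> {1..n}" by (auto simp: cprev_def)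

lemma step_a:
  assumes t: "t \<in> {1..n}" and k: "2 \<le> k" "k + 2 \<le> n"
  shows "Ivl n k (cnext n t) = (Ivl n k t - {t}) \<union> {pi_top k n t}"
proof (rule set_eqI)
  fix x
  have p: "pi_top k n t = (if t + k \<le> n then t + k else t + k - n)" using pt_eq[OF t] k by simp
  show "x \<in> Ivl n k (cnext n t) \<longleftrightarrow> x \<in> (Ivl n k t - {t}) \<union> {pi_top k n t}"
    unfolding mem_Ivl[OF cnext_in[OF t]] Un_iff Diff_iff mem_Ivl[OF t] p singleton_iff
    using t k by (auto simp: rk_def cnext_def split: if_splits)
qed

lemma step_b:
  assumes t: "t \<in> {1..n}" and k: "2 \<le> k" "k + 2 \<le> n"
  shows "Alt n k (cnext n t) = (Ivl n k t - {t}) \<union> {pi_top k n (cnext n t)}"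
proof (rule set_eqI)
  fix x
  have p: "pi_top k n (cnext n t) = (if cnext n t + k \<le> n then cnext n t + k else cnext n t + k - n)"
    using pt_eq[OF cnext_in[OF t]] k by simp
  show "x \<in> Alt n k (cnext n t) \<longleftrightarrow> x \<in> (Ivl n k t - {t}) \<union> {pi_top k n (cnext n t)}"
    unfolding mem_Alt[OF cnext_in[OF t]] Un_iff Diff_iff mem_Ivl[OF t] p singleton_iff
    using t k by (auto simp: rk_def cnext_def split: if_splits)
qed

lemma step_c:
  assumes t: "t \<in> {1..n}" and k: "2 \<le> k" "k + 2 \<le> n"
  shows "Ivl n k (cnext n t) = (Alt n k t - {t}) \<union> {pi_top k n (cprev n t)}"
proof (rule set_eqI)
  fix x
  have p: "pi_top k n (cprev n t) = (if cprev n t + k \<le> n then cprev n t + k else cprev n t + k - n)"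
    using pt_eq[OF cprev_in[OF t]] k by simp
  show "x \<in> Ivl n k (cnext n t) \<longleftrightarrow> x \<in> (Alt n k t - {t}) \<union> {pi_top k n (cprev n t)}"
    unfolding mem_Ivl[OF cnext_in[OF t]] Un_iff Diff_iff mem_Alt[OF t] p singleton_iff
    using t k by (auto simp: rk_def cnext_def cprev_def split: if_splits)
qed

lemma step_d:
  assumes t: "t \<in> {1..n}" and k: "2 \<le> k" "k + 2 \<le> n"
  shows "Alt n k (cnext n t) \<noteq> (Alt n k t - {t}) \<union> {j}"
proof
  assume h: "Alt n k (cnext n t) = (Alt n k t - {t}) \<union> {j}"
  define u where "u = (if t + k - 1 \<le> n then t + k - 1 else t + k - 1 - n)"
  define v where "v = (if t + k + 1 \<le> n then t + k + 1 else t + k + 1 - n)"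
  have u1: "u \<in> Alt n k (cnext n t)" unfolding mem_Alt[OF cnext_in[OF t]]
    using t k by (auto simp: u_def rk_def cnext_def)
  have u2: "u \<notin> Alt n k t - {t}" unfolding Diff_iff mem_Alt[OF t]
    using t k by (auto simp: u_def rk_def)
  have v1: "v \<in> Alt n k (cnext n t)" unfolding mem_Alt[OF cnext_in[OF t]]
    using t k by (auto simp: v_def rk_def cnext_def)
  have v2: "v \<notin> Alt n k t - {t}" unfolding Diff_iff mem_Alt[OF t]
    using t k by (auto simp: v_def rk_def)
  have "u = j" using u1 u2 h by blast
  moreover have "v = j" using v1 v2 h by blast
  moreover have "u \<noteq> v" using t k by (auto simp: u_def v_def)
  ultimately show False by simp
qed

definition ee :: "nat \<Rightarrow> nat \<Rightarrow> nat \<Rightarrow> nat" where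
  "ee n t r = (if t + r \<le> n then t + r else t + r - n)"

lemma ee_in: "t \<in> {1..n} \<Longrightarrow> r < n \<Longrightarrow> ee n t r \<in> {1..n}"
  by (auto simp: ee_def)

lemma rk_ee: "t \<in> {1..n} \<Longrightarrow> r < n \<Longrightarrow> rk n t (ee n t r) = r"
  by (auto simp: ee_def rk_def)

lemma rk_shift:
  assumes t: "t \<in> {1..n}" and s: "s \<in> {1..n}" and r: "r < n"
  shows "rk n s (ee n t r) = (if rk n t s \<le> r then r - rk n t s else r + n - rk n t s)"
proof (cases "t \<le> s")
  case True
  then have d: "rk n t s = s - t" by (simp add: rk_def)
  show ?thesis
  proof (cases "t + r \<le> n")
    case True
    then have "ee n t r = t + r" by (simp add: ee_def)
    then show ?thesis using d t s r \<open>t \<le> s\<close> True by (simp add: rk_def; arith)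
  next
    case False
    then have "ee n t r = t + r - n" by (simp add: ee_def)
    then show ?thesis using d t s r \<open>t \<le> s\<close> False by (simp add: rk_def; arith)
  qed
next
  case False
  then have d: "rk n t s = s + n - t" by (simp add: rk_def)
  show ?thesis
  proof (cases "t + r \<le> n")
    case True
    then have "ee n t r = t + r" by (simp add: ee_def)
    then show ?thesis using d t s r \<open>\<not> t \<le> s\<close> True by (simp add: rk_def; arith)
  next
    case False
    then have "ee n t r = t + r - n" by (simp add: ee_def)
    then show ?thesis using d t s r \<open>\<not> t \<le> s\<close> False by (simp add: rk_def; arith)
  qed
qed

lemma rk_lt: "t \<in> {1..n} \<Longrightarrow> s \<in> {1..n} \<Longrightarrow> rk n t s < n"
  by (auto simp: rk_def)

lemma rk_zero: "t \<in> {1..n} \<Longrightarrow> s \<in> {1..n} \<Longrightarrow> rk n t s = 0 \<Longrightarrow> s = t"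
  by (auto simp: rk_def split: if_splits)

lemma rk_one: "t \<in> {1..n} \<Longrightarrow> s \<in> {1..n} \<Longrightarrow> rk n t s = 1 \<Longrightarrow> s = cnext n t"
  by (auto simp: rk_def cnext_def split: if_splits)

lemma rk_last: "t \<in> {1..n} \<Longrightarrow> s \<in> {1..n} \<Longrightarrow> rk n t s = n - 1 \<Longrightarrow> t = cnext n s"
  by (auto simp: rk_def cnext_def split: if_splits)

lemma card_inter:
  assumes t: "t \<in> {1..n}" and s: "s \<in> {1..n}" and k: "2 \<le> k" "k + 2 \<le> n"
    and st: "s \<noteq> t" "s \<noteq> cnext n t" "t \<noteq> cnext n s"
  shows "card (Ivl n k s \<inter> Ivl n k t) + 2 \<le> k"
proof -
  define d where "d = rk n t s"
  have dn: "d < n" using rk_lt[OF t s] d_def by simp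
  have d0: "d \<noteq> 0"
  proof
    assume "d = 0" then have "s = t" using rk_zero[OF t s] d_def by simp
    with st show False by simp
  qed
  have d1: "d \<noteq> 1"
  proof
    assume "d = 1" then have "s = cnext n t" using rk_one[OF t s] d_def by simp
    with st show False by simp
  qed
  have dl: "d \<noteq> n - 1"
  proof
    assume "d = n - 1" then have "t = cnext n s" using rk_last[OF t s] d_def by simp
    with st show False by simp
  qed
  define ra where "ra = (if d \<le> k then d - 1 else k - 1)"
  define rb where "rb = (if d \<le> k then d - 2 else k - 2)"
  have ran: "ra < n" "rb < n" using dn k by (auto simp: ra_def rb_def)
  define a where "a = ee n t ra"
  define b where "b = ee n t rb"
  have a1: "a \<in> Ivl n k t" unfolding mem_Ivl[OF t] a_def rk_ee[OF t ran(1)]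
    using ee_in[OF t ran(1)] k d0 by (auto simp: ra_def)
  have b1: "b \<in> Ivl n k t" unfolding mem_Ivl[OF t] b_def rk_ee[OF t ran(2)]
    using ee_in[OF t ran(2)] k d0 by (auto simp: rb_def)
  have a2: "a \<notin> Ivl n k s" unfolding mem_Ivl[OF s] a_def rk_shift[OF t s ran(1)] d_def[symmetric]
    using k d0 d1 dl dn by (auto simp: ra_def)
  have b2: "b \<notin> Ivl n k s" unfolding mem_Ivl[OF s] b_def rk_shift[OF t s ran(2)] d_def[symmetric]
    using k d0 d1 dl dn by (auto simp: rb_def)
  have "rk n t a \<noteq> rk n t b" unfolding a_def b_def rk_ee[OF t ran(1)] rk_ee[OF t ran(2)]
    using k d0 d1 by (auto simp: ra_def rb_def)
  then have ab: "a \<noteq> b" by metis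
  have sub: "Ivl n k s \<inter> Ivl n k t \<subseteq> Ivl n k t - {a, b}" using a2 b2 by blast
  have fin: "finite (Ivl n k t)" by (rule finite_subset[OF Ivl_sub]) simp
  have "card (Ivl n k t - {a, b}) = card (Ivl n k t) - 2"
    using a1 b1 ab fin by (simp add: card_Diff_subset)
  also have "\<dots> = k - 2" using card_Ivl[OF t] k by simp
  finally have "card (Ivl n k t - {a, b}) = k - 2" .
  moreover have "card (Ivl n k s \<inter> Ivl n k t) \<le> card (Ivl n k t - {a, b})"
    by (rule card_mono) (use fin sub in auto)
  ultimately show ?thesis using k by simp
qed

lemma ex_superset_card:
  assumes "C \<subseteq> {1..n}" "card C \<le> m" "m \<le> n"
  obtains C' where "C \<subseteq> C'" "C' \<subseteq> {1..n}" "card C' = m"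
proof -
  have finC: "finite C" by (rule finite_subset[OF assms(1)]) simp
  have "card ({1..n} - C) = n - card C" using assms(1) finC by (simp add: card_Diff_subset)
  then have "m - card C \<le> card ({1..n} - C)" using assms by simp
  then obtain D where D: "D \<subseteq> {1..n} - C" "card D = m - card C" "finite D"
    by (rule obtain_subset_with_card_n)
  have disj: "C \<inter> D = {}" using D(1) by blast
  have "card (C \<union> D) = card C + card D" by (rule card_Un_disjoint[OF finC D(3) disj])
  then have "card (C \<union> D) = m" using D(2) assms(2) by simp
  moreover have "C \<subseteq> C \<union> D" by blast
  moreover have "C \<union> D \<subseteq> {1..n}" using assms(1) D(1) by blast
  ultimately show ?thesis using that by blast
qed

lemma paving_nb:
  assumes B: "B = {J. J \<subseteq> {1..n} \<and> card J = r} - N" and r1: "1 \<le> r" and rn: "r + 1 \<le> n"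
    and pw: "\<forall>X\<in>N. \<forall>Y\<in>N. X \<noteq> Y \<longrightarrow> card (X \<inter> Y) + 2 \<le> r"
  shows "paving n r B"
  unfolding paving_def
proof (intro allI impI)
  fix C assume circ: "m_circuit n B C"
  show "r \<le> card C"
  proof (rule ccontr)
    assume "\<not> r \<le> card C"
    then have cC: "card C \<le> r - 1" by simp
    have Cn: "C \<subseteq> {1..n}" and ni: "\<not> m_indep B C" using circ by (auto simp: m_circuit_def)
    have rn': "r - 1 \<le> n" using rn by simp
    obtain C' where C': "C \<subseteq> C'" "C' \<subseteq> {1..n}" "card C' = r - 1"
      by (rule ex_superset_card[OF Cn cC rn'])
    have finC': "finite C'" by (rule finite_subset[OF C'(2)]) simp
    have "card ({1..n} - C') = n - (r - 1)" using C'(2,3) finC' by (simp add: card_Diff_subset)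
    then have "2 \<le> card ({1..n} - C')" using rn r1 by simp
    then obtain D where D: "D \<subseteq> {1..n} - C'" "card D = 2" "finite D"
      by (rule obtain_subset_with_card_n)
    then obtain a b where ab: "D = {a, b}" "a \<noteq> b" by (auto simp: card_2_iff)
    have a: "a \<in> {1..n}" "a \<notin> C'" and b: "b \<in> {1..n}" "b \<notin> C'" using D(1) ab(1) by auto
    have XN: "insert a C' \<in> N"
    proof (rule ccontr)
      assume "insert a C' \<notin> N"
      moreover have "card (insert a C') = r" using a(2) finC' C'(3) r1 by simp
      moreover have "insert a C' \<subseteq> {1..n}" using a(1) C'(2) by blast
      ultimately have "insert a C' \<in> B" using B by blast
      moreover have "C \<subseteq> insert a C'" using C'(1) by blast
      ultimately have "m_indep B C" unfolding m_indep_def by blast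
      with ni show False by simp
    qed
    have YN: "insert b C' \<in> N"
    proof (rule ccontr)
      assume "insert b C' \<notin> N"
      moreover have "card (insert b C') = r" using b(2) finC' C'(3) r1 by simp
      moreover have "insert b C' \<subseteq> {1..n}" using b(1) C'(2) by blast
      ultimately have "insert b C' \<in> B" using B by blast
      moreover have "C \<subseteq> insert b C'" using C'(1) by blast
      ultimately have "m_indep B C" unfolding m_indep_def by blast
      with ni show False by simp
    qed
    have ne: "insert a C' \<noteq> insert b C'" using a(2) ab(2) by blast
    have "insert a C' \<inter> insert b C' = C'" using a(2) b(2) ab(2) by blast
    then have "card C' + 2 \<le> r" using pw XN YN ne by metis
    then show False using C'(3) r1 by simp
  qed
qed

lemma ex_circuit0:
  "finite S \<Longrightarrow> (S \<subseteq> {1..n} \<longrightarrow> \<not> m_indep B S \<longrightarrow> (\<exists>C\<subseteq>S. m_circuit n B C))"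
proof (induction S rule: finite_psubset_induct)
  case (psubset S)
  show ?case
  proof (intro impI)
    assume Sn: "S \<subseteq> {1..n}" and ni: "\<not> m_indep B S"
    show "\<exists>C\<subseteq>S. m_circuit n B C"
    proof (cases "\<forall>x\<in>S. m_indep B (S - {x})")
      case True
      have "m_circuit n B S" unfolding m_circuit_def using Sn ni True by blast
      then show ?thesis by blast
    next
      case False
      then obtain x where x: "x \<in> S" "\<not> m_indep B (S - {x})" by blast
      have ps: "S - {x} \<subset> S" using x(1) by blast
      have sn: "S - {x} \<subseteq> {1..n}" using Sn by blast
      have "S - {x} \<subseteq> {1..n} \<longrightarrow> \<not> m_indep B (S - {x}) \<longrightarrow> (\<exists>C\<subseteq>S - {x}. m_circuit n B C)"
        by (rule psubset.IH[OF ps])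
      then obtain C where "C \<subseteq> S - {x}" "m_circuit n B C" using sn x(2) by blast
      then show ?thesis by blast
    qed
  qed
qed

lemma ex_circuit:
  assumes "finite S" "S \<subseteq> {1..n}" "\<not> m_indep B S"
  shows "\<exists>C\<subseteq>S. m_circuit n B C"
  using ex_circuit0[OF assms(1)] assms(2,3) by blast

lemma indep_small:
  assumes "paving n r B" "S \<subseteq> {1..n}" "card S < r"
  shows "m_indep B S"
proof (rule ccontr)
  assume ni: "\<not> m_indep B S"
  have "finite S" by (rule finite_subset[OF assms(2)]) simp
  then obtain C where C: "C \<subseteq> S" "m_circuit n B C" using ex_circuit[OF _ assms(2) ni] by blast
  have "card C \<le> card S" by (rule card_mono[OF \<open>finite S\<close> C(1)])
  moreover have "r \<le> card C" using assms(1) C(2) by (simp add: paving_def)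
  ultimately show False using assms(3) by simp
qed

lemma dual_nb:
  assumes B: "B = {J. J \<subseteq> {1..n} \<and> card J = k} - N" and N: "\<forall>X\<in>N. X \<subseteq> {1..n} \<and> card X = k"
    and kn: "k \<le> n"
  shows "dual_bases n B = {J. J \<subseteq> {1..n} \<and> card J = n - k} - (\<lambda>b. {1..n} - b) ` N"
proof (rule set_eqI)
  fix J
  show "J \<in> dual_bases n B \<longleftrightarrow> J \<in> {J. J \<subseteq> {1..n} \<and> card J = n - k} - (\<lambda>b. {1..n} - b) ` N"
  proof
    assume "J \<in> dual_bases n B"
    then obtain b where b: "b \<in> B" "J = {1..n} - b" by (auto simp: dual_bases_def)
    have bn: "b \<subseteq> {1..n}" "card b = k" "b \<notin> N" using b(1) B by auto
    have fb: "finite b" by (rule finite_subset[OF bn(1)]) simp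
    have cJ: "card J = n - k" using b(2) bn fb by (simp add: card_Diff_subset)
    have "J \<notin> (\<lambda>b. {1..n} - b) ` N"
    proof
      assume "J \<in> (\<lambda>b. {1..n} - b) ` N"
      then obtain X where X: "X \<in> N" "J = {1..n} - X" by blast
      have "X \<subseteq> {1..n}" using N X(1) by blast
      then have "X = b" using X(2) b(2) bn(1) by blast
      then show False using X(1) bn(3) by simp
    qed
    then show "J \<in> {J. J \<subseteq> {1..n} \<and> card J = n - k} - (\<lambda>b. {1..n} - b) ` N"
      using cJ b(2) by blast
  next
    assume J: "J \<in> {J. J \<subseteq> {1..n} \<and> card J = n - k} - (\<lambda>b. {1..n} - b) ` N"
    define b where "b = {1..n} - J"
    have Jn: "J \<subseteq> {1..n}" "card J = n - k" using J by auto
    have fJ: "finite J" by (rule finite_subset[OF Jn(1)]) simp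
    have cb: "card b = k" using Jn fJ kn by (simp add: b_def card_Diff_subset)
    have Jb: "J = {1..n} - b" using Jn(1) by (auto simp: b_def)
    have "b \<notin> N"
    proof
      assume "b \<in> N"
      then have "J \<in> (\<lambda>b. {1..n} - b) ` N" using Jb by blast
      then show False using J by blast
    qed
    then have "b \<in> B" using B cb by (auto simp: b_def)
    then show "J \<in> dual_bases n B" using Jb by (auto simp: dual_bases_def)
  qed
qed

lemma dual_pw:
  assumes N: "\<forall>X\<in>N. X \<subseteq> {1..n} \<and> card X = k"
    and pw: "\<forall>X\<in>N. \<forall>Y\<in>N. X \<noteq> Y \<longrightarrow> card (X \<inter> Y) + 2 \<le> k"
  shows "\<forall>X\<in>(\<lambda>b. {1..n} - b) ` N. \<forall>Y\<in>(\<lambda>b. {1..n} - b) ` N. X \<noteq> Y \<longrightarrow> card (X \<inter> Y) + 2 \<le> n - k"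
proof (intro ballI impI)
  fix X' Y' assume X': "X' \<in> (\<lambda>b. {1..n} - b) ` N" and Y': "Y' \<in> (\<lambda>b. {1..n} - b) ` N" and ne: "X' \<noteq> Y'"
  obtain X where X: "X \<in> N" "X' = {1..n} - X" using X' by blast
  obtain Y where Y: "Y \<in> N" "Y' = {1..n} - Y" using Y' by blast
  have XY: "X \<noteq> Y" using X Y ne by blast
  have Xn: "X \<subseteq> {1..n}" "card X = k" and Yn: "Y \<subseteq> {1..n}" "card Y = k" using N X(1) Y(1) by auto
  have fX: "finite X" by (rule finite_subset[OF Xn(1)]) simp
  have fY: "finite Y" by (rule finite_subset[OF Yn(1)]) simp
  have c: "card (X \<inter> Y) + 2 \<le> k" using pw X(1) Y(1) XY by blast
  have u: "card X + card Y = card (X \<union> Y) + card (X \<inter> Y)" by (rule card_Un_Int[OF fX fY])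
  have e: "X' \<inter> Y' = {1..n} - (X \<union> Y)" using X(2) Y(2) by blast
  have s: "X \<union> Y \<subseteq> {1..n}" using Xn Yn by blast
  have "card (X' \<inter> Y') = n - card (X \<union> Y)" unfolding e using s fX fY by (simp add: card_Diff_subset)
  moreover have "card (X \<union> Y) \<le> n" using card_mono[OF _ s] by simp
  ultimately show "card (X' \<inter> Y') + 2 \<le> n - k" using u c Xn(2) Yn(2) by simp
qed

definition FF :: "nat \<Rightarrow> nat \<Rightarrow> nat set \<Rightarrow> nat \<Rightarrow> nat set" where
  "FF n k A t = (if t \<in> A then Alt n k t else Ivl n k t)"

lemma rk_self: "rk n t t = 0" by (simp add: rk_def)

lemma t_in_Ivl: "t \<in> {1..n} \<Longrightarrow> 2 \<le> k \<Longrightarrow> t \<in> Ivl n k t"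
  unfolding mem_Ivl[of t n] by (simp add: rk_self)

lemma t_in_Alt: "t \<in> {1..n} \<Longrightarrow> 2 \<le> k \<Longrightarrow> t \<in> Alt n k t"
  unfolding mem_Alt[of t n] by (simp add: rk_self)

lemma t_in_FF: "t \<in> {1..n} \<Longrightarrow> 2 \<le> k \<Longrightarrow> t \<in> FF n k A t"
  by (simp add: FF_def t_in_Ivl t_in_Alt)

lemma FF_sub: "FF n k A t \<subseteq> {1..n}"
  unfolding FF_def using Ivl_sub[of n k t] Alt_sub[of n k t] by (cases "t \<in> A") simp_all

lemma cnext_cprev: "t \<in> {1..n} \<Longrightarrow> cnext n (cprev n t) = t"
  by (auto simp: cnext_def cprev_def)

lemma F_step:
  assumes na: "nonadjacent n A" and t: "t \<in> {1..n}" and k: "2 \<le> k" "k + 2 \<le> n"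
  shows "FF n k A (cnext n t) = (FF n k A t - {t}) \<union> {sigmaA n A (pi_top k n) t}"
proof (cases "t \<in> A")
  case True
  then have "cnext n t \<notin> A" using na by (simp add: nonadjacent_def)
  then have "FF n k A (cnext n t) = Ivl n k (cnext n t)" by (simp add: FF_def)
  moreover have "FF n k A t = Alt n k t" using True by (simp add: FF_def)
  moreover have "sigmaA n A (pi_top k n) t = pi_top k n (cprev n t)" using True by (simp add: sigmaA_def)
  ultimately show ?thesis using step_c[OF t k] by simp
next
  case False
  show ?thesis
  proof (cases "cnext n t \<in> A")
    case True
    then have "FF n k A (cnext n t) = Alt n k (cnext n t)" by (simp add: FF_def)
    moreover have "FF n k A t = Ivl n k t" using False by (simp add: FF_def)
    moreover have "sigmaA n A (pi_top k n) t = pi_top k n (cnext n t)" using False True by (simp add: sigmaA_def)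
    ultimately show ?thesis using step_b[OF t k] by simp
  next
    case nF: False
    then have "FF n k A (cnext n t) = Ivl n k (cnext n t)" by (simp add: FF_def)
    moreover have "FF n k A t = Ivl n k t" using False by (simp add: FF_def)
    moreover have "sigmaA n A (pi_top k n) t = pi_top k n t" using False nF by (simp add: sigmaA_def)
    ultimately show ?thesis using step_a[OF t k] by simp
  qed
qed

lemma ptop_ne:
  assumes i: "i \<in> {1..n}" and t: "t \<in> {1..n}" and k: "2 \<le> k" "k + 2 \<le> n"
    and c: "i = t \<or> i = cnext n t \<or> i = cprev n t"
  shows "pi_top k n i \<noteq> t"
proof -
  have p: "pi_top k n i = (if i + k \<le> n then i + k else i + k - n)" using pt_eq[OF i] k by simp
  show ?thesis unfolding p using c i t k by (auto simp: cnext_def cprev_def split: if_splits)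
qed

lemma sig_ne:
  assumes t: "t \<in> {1..n}" and k: "2 \<le> k" "k + 2 \<le> n"
  shows "sigmaA n A (pi_top k n) t \<noteq> t"
proof -
  have "sigmaA n A (pi_top k n) t = pi_top k n (if t \<in> A then cprev n t else if cnext n t \<in> A then cnext n t else t)"
    by (simp add: sigmaA_def)
  moreover have "pi_top k n (if t \<in> A then cprev n t else if cnext n t \<in> A then cnext n t else t) \<noteq> t"
  proof (cases "t \<in> A")
    case True then show ?thesis using ptop_ne[OF cprev_in[OF t] t k] by simp
  next
    case False
    then show ?thesis using ptop_ne[OF cnext_in[OF t] t k] ptop_ne[OF t t k] by simp
  qed
  ultimately show ?thesis by simp
qed

lemma decperm_eq:
  assumes tI: "t \<in> I t" and fin: "finite (I t)" and c: "card (I (cnext n t)) = card (I t)"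
    and e: "I (cnext n t) = (I t - {t}) \<union> {j}"
  shows "decperm_pi n I t = j"
proof -
  have "(THE j. j \<in> I (cnext n t) \<and> I (cnext n t) = (I t - {t}) \<union> {j}) = j"
  proof (rule the_equality)
    show "j \<in> I (cnext n t) \<and> I (cnext n t) = (I t - {t}) \<union> {j}" using e by blast
  next
    fix j' assume h: "j' \<in> I (cnext n t) \<and> I (cnext n t) = (I t - {t}) \<union> {j'}"
    show "j' = j"
    proof (rule ccontr)
      assume ne: "j' \<noteq> j"
      have "j \<in> (I t - {t}) \<union> {j'}" using e h by blast
      then have jI: "j \<in> I t - {t}" using ne by blast
      have "I (cnext n t) = I t - {t}" using e jI by blast
      then have "card (I (cnext n t)) = card (I t) - 1" using tI fin by simp
      moreover have "card (I t) \<ge> 1" using tI fin by (metis One_nat_def Suc_leI card_gt_0_iff empty_iff)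
      ultimately show False using c by simp
    qed
  qed
  then show ?thesis using tI by (simp add: decperm_pi_def)
qed

lemma gn_at:
  assumes gn: "grassmann_necklace n k I" and t: "t \<in> {1..n}"
  shows "I t \<subseteq> {1..n}" "card (I t) = k"
    "t \<in> I t \<Longrightarrow> \<exists>j\<in>{1..n}. I (cnext n t) = (I t - {t}) \<union> {j}"
  using gn t unfolding grassmann_necklace_def by blast+

lemma recover:
  assumes gn: "grassmann_necklace n k I" and na: "nonadjacent n A" and k: "2 \<le> k" "k + 2 \<le> n"
    and dp: "\<forall>i\<in>{1..n}. decperm_pi n I i = sigmaA n A (pi_top k n) i"
  shows "\<forall>t\<in>{1..n}. I t = FF n k A t"
proof -
  define G where "G t = (I t - FF n k A t) \<union> (FF n k A t - I t)" for t
  have stepG: "G (cnext n t) \<subseteq> G t - {t}" if t: "t \<in> {1..n}" for t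
  proof -
    have sne: "sigmaA n A (pi_top k n) t \<noteq> t" by (rule sig_ne[OF t k])
    have dpt: "decperm_pi n I t = sigmaA n A (pi_top k n) t" using dp t by blast
    have tI: "t \<in> I t"
    proof (rule ccontr)
      assume "t \<notin> I t"
      then have "decperm_pi n I t = t" by (simp add: decperm_pi_def)
      then show False using dpt sne by simp
    qed
    obtain j where j: "I (cnext n t) = (I t - {t}) \<union> {j}" using gn_at(3)[OF gn t tI] by blast
    have fin: "finite (I t)" by (rule finite_subset[OF gn_at(1)[OF gn t]]) simp
    have cc: "card (I (cnext n t)) = card (I t)" using gn_at(2)[OF gn t] gn_at(2)[OF gn cnext_in[OF t]] by simp
    have "decperm_pi n I t = j" by (rule decperm_eq[OF tI fin cc j])
    then have js: "j = sigmaA n A (pi_top k n) t" using dpt by simp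
    have eI: "I (cnext n t) = (I t - {t}) \<union> {sigmaA n A (pi_top k n) t}" using j js by simp
    have eF: "FF n k A (cnext n t) = (FF n k A t - {t}) \<union> {sigmaA n A (pi_top k n) t}"
      by (rule F_step[OF na t k])
    have tF: "t \<in> FF n k A t" by (rule t_in_FF[OF t k(1)])
    show ?thesis unfolding G_def eI eF using sne tI tF by blast
  qed
  have n1: "1 \<le> n" using k by simp
  have ind: "\<forall>m. m + 1 \<le> n \<longrightarrow> G (m + 1) \<subseteq> G 1 - {1..<m+1}"
  proof (rule allI)
    fix m show "m + 1 \<le> n \<longrightarrow> G (m + 1) \<subseteq> G 1 - {1..<m+1}"
    proof (induction m)
      case 0 show ?case by simp
    next
      case (Suc m)
      show ?case
      proof
        assume h: "Suc m + 1 \<le> n"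
        then have ih: "G (m + 1) \<subseteq> G 1 - {1..<m+1}" using Suc.IH by simp
        have mn: "m + 1 \<in> {1..n}" using h by simp
        have cn: "cnext n (m + 1) = Suc m + 1" using h by (simp add: cnext_def)
        have "G (Suc m + 1) \<subseteq> G (m + 1) - {m + 1}" using stepG[OF mn] unfolding cn .
        also have "\<dots> \<subseteq> G 1 - {1..<Suc m + 1}" using ih by auto
        finally show "G (Suc m + 1) \<subseteq> G 1 - {1..<Suc m + 1}" .
      qed
    qed
  qed
  have Gn: "G n \<subseteq> G 1 - {1..<n}" using ind[rule_format, of "n - 1"] n1 by simp
  have nn: "n \<in> {1..n}" using n1 by simp
  have c1: "cnext n n = 1" by (simp add: cnext_def)
  have "G 1 \<subseteq> G n - {n}" using stepG[OF nn] unfolding c1 .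
  then have G1a: "G 1 \<subseteq> G 1 - {1..<n} - {n}" using Gn by blast
  have "{1..n} = {1..<n} \<union> {n}" using n1 by auto
  then have G1: "G 1 \<subseteq> G 1 - {1..n}" using G1a by blast
  have "G 1 \<subseteq> {1..n}" unfolding G_def using gn_at(1)[OF gn] FF_sub[of n k A 1] n1 by auto
  then have G1e: "G 1 = {}" using G1 by blast
  show ?thesis
  proof
    fix t assume t: "t \<in> {1..n}"
    have "G t = {}"
    proof (cases "t = 1")
      case True then show ?thesis using G1e by simp
    next
      case False
      then have "(t - 1) + 1 \<le> n" using t by simp
      then have "G ((t - 1) + 1) \<subseteq> G 1 - {1..<(t-1)+1}" using ind by blast
      then show ?thesis using G1e False t by simp
    qed
    then show "I t = FF n k A t" unfolding G_def by blast
  qed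
qed

lemma shape:
  assumes gn: "grassmann_necklace n k I" and sp: "sparse_paving n k (positroid_bases n k I)"
    and k: "2 \<le> k" "k + 2 \<le> n" and t: "t \<in> {1..n}"
  shows "I t = Ivl n k t \<or> I t = Alt n k t"
proof -
  define B where "B = positroid_bases n k I"
  have It: "I t \<subseteq> {1..n}" "card (I t) = k" using gn_at[OF gn t] by auto
  have pav1: "paving n k B" and pav2: "paving n (n - k) (dual_bases n B)"
    using sp by (simp_all add: sparse_paving_def B_def)
  define Q where "Q = {x\<in>{1..n}. trank n t x \<le> k}"
  define S where "S = {x\<in>{1..n}. trank n t x < k - 1}"
  have Qn: "Q \<subseteq> {1..n}" and Sn: "S \<subseteq> {1..n}" by (auto simp: Q_def S_def)
  have "trank n t ` Q = {r. r < n \<and> r \<le> k}" unfolding Q_def by (rule trank_img_filter[OF t])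
  also have "\<dots> = {0..k}" using k by auto
  finally have Qi: "trank n t ` Q = {0..k}" .
  have "trank n t ` S = {r. r < n \<and> r < k - 1}" unfolding S_def by (rule trank_img_filter[OF t])
  also have "\<dots> = {0..<k-1}" using k by auto
  finally have Si: "trank n t ` S = {0..<k-1}" .
  have cQ: "card Q = k + 1" using card_trank_img[OF t Qn] Qi by simp
  have cS: "card S = k - 1" using card_trank_img[OF t Sn] Si by simp
  define T where "T = {1..n} - Q"
  have fQ: "finite Q" by (rule finite_subset[OF Qn]) simp
  have cT: "card T = n - (k + 1)" unfolding T_def using Qn fQ cQ by (simp add: card_Diff_subset)
  have Tn: "T \<subseteq> {1..n}" by (auto simp: T_def)
  have "m_indep (dual_bases n B) T" by (rule indep_small[OF pav2 Tn]) (use cT k in simp)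
  then obtain b' where b': "b' \<in> dual_bases n B" "T \<subseteq> b'" by (auto simp: m_indep_def)
  then obtain b where b: "b \<in> B" "b' = {1..n} - b" by (auto simp: dual_bases_def)
  have bB: "b \<subseteq> {1..n}" "tle n t (I t) b" using b(1) t by (auto simp: B_def positroid_bases_def)
  have bQ: "b \<subseteq> Q"
  proof
    fix x assume x: "x \<in> b"
    then have "x \<notin> b'" using b(2) by blast
    then have "x \<notin> T" using b'(2) by blast
    then show "x \<in> Q" using x bB(1) by (auto simp: T_def)
  qed
  have IQ: "I t \<subseteq> Q" unfolding Q_def by (rule tle_upper[OF t bB(2) It(1) bB(1) bQ[unfolded Q_def]])
  have "m_indep B S" by (rule indep_small[OF pav1 Sn]) (use cS k in simp)
  then obtain b2 where b2: "b2 \<in> B" "S \<subseteq> b2" by (auto simp: m_indep_def)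
  have b2B: "b2 \<subseteq> {1..n}" "tle n t (I t) b2" using b2(1) t by (auto simp: B_def positroid_bases_def)
  have k1n: "k - 1 \<le> n" using k by simp
  have SI: "S \<subseteq> I t" unfolding S_def by (rule tle_lower[OF t b2B(2) It(1) b2B(1) b2(2)[unfolded S_def] k1n])
  define R where "R = trank n t ` I t"
  have RU: "R \<subseteq> {..k}" unfolding R_def using image_mono[OF IQ, of "trank n t"] Qi by auto
  have RL: "{0..<k-1} \<subseteq> R" unfolding R_def using image_mono[OF SI, of "trank n t"] Si by simp
  have cR: "card R = k" unfolding R_def using card_trank_img[OF t It(1)] It(2) by simp
  have fR: "finite R" using RU by (rule finite_subset) simp
  show ?thesis
  proof (cases "k - 1 \<in> R")
    case True
    have "{0..<k} = insert (k - 1) {0..<k-1}" using k by auto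
    then have sub: "{0..<k} \<subseteq> R" using True RL by simp
    have "{0..<k} = R" by (rule card_subset_eq[OF fR sub]) (use cR in simp)
    then have "trank n t ` I t = trank n t ` Ivl n k t" using Ivl_img[OF t] k R_def by simp
    then have "I t = Ivl n k t" using inj_on_image_eq_iff[OF trank_inj[OF t] It(1) Ivl_sub] by simp
    then show ?thesis by simp
  next
    case False
    have sub: "R \<subseteq> insert k {0..<k-1}"
    proof
      fix x assume x: "x \<in> R"
      then have "x \<le> k" "x \<noteq> k - 1" using RU False by auto
      then show "x \<in> insert k {0..<k-1}" by auto
    qed
    have "R = insert k {0..<k-1}" by (rule card_subset_eq[OF _ sub]) (use cR k in simp_all)
    then have "trank n t ` I t = trank n t ` Alt n k t" using Alt_img[OF t] k R_def by simp
    then have "I t = Alt n k t" using inj_on_image_eq_iff[OF trank_inj[OF t] It(1) Alt_sub] by simp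
    then show ?thesis by simp
  qed
qed

lemma bases_FF:
  assumes IF: "\<forall>t\<in>{1..n}. I t = FF n k A t" and A: "A \<subseteq> {1..n}" and k: "2 \<le> k" "k + 2 \<le> n"
  shows "positroid_bases n k I = {J. J \<subseteq> {1..n} \<and> card J = k} - Ivl n k ` A"
proof (rule set_eqI)
  fix J
  show "J \<in> positroid_bases n k I \<longleftrightarrow> J \<in> {J. J \<subseteq> {1..n} \<and> card J = k} - Ivl n k ` A"
  proof (cases "J \<subseteq> {1..n} \<and> card J = k")
    case False
    then show ?thesis by (auto simp: positroid_bases_def)
  next
    case True
    have per: "tle n t (I t) J \<longleftrightarrow> (t \<in> A \<longrightarrow> J \<noteq> Ivl n k t)" if t: "t \<in> {1..n}" for t
    proof (cases "t \<in> A")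
      case tA: True
      then have "I t = Alt n k t" using IF t by (simp add: FF_def)
      moreover have "tle n t (Alt n k t) J \<longleftrightarrow> J \<noteq> Ivl n k t"
        by (rule tle_Alt[OF t]) (use k True in simp_all)
      ultimately show ?thesis using tA by simp
    next
      case tA: False
      then have "I t = Ivl n k t" using IF t by (simp add: FF_def)
      moreover have "tle n t (Ivl n k t) J"
        by (rule tle_Ivl[OF t]) (use k True in simp_all)
      ultimately show ?thesis using tA by simp
    qed
    have eqv: "(\<forall>t\<in>{1..n}. tle n t (I t) J) \<longleftrightarrow> J \<notin> Ivl n k ` A"
    proof
      assume h: "\<forall>t\<in>{1..n}. tle n t (I t) J"
      show "J \<notin> Ivl n k ` A"
      proof
        assume "J \<in> Ivl n k ` A"
        then obtain t where t: "t \<in> A" "J = Ivl n k t" by blast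
        have "t \<in> {1..n}" using t(1) A by blast
        then have "tle n t (I t) J" using h by blast
        then show False using per[OF \<open>t \<in> {1..n}\<close>] t by simp
      qed
    next
      assume h: "J \<notin> Ivl n k ` A"
      show "\<forall>t\<in>{1..n}. tle n t (I t) J"
      proof
        fix t assume t: "t \<in> {1..n}"
        have "t \<in> A \<longrightarrow> J \<noteq> Ivl n k t" using h by blast
        then show "tle n t (I t) J" using per[OF t] by simp
      qed
    qed
    show ?thesis unfolding positroid_bases_def using True eqv by simp
  qed
qed

lemma bwd:
  assumes gn: "grassmann_necklace n k I" and k: "2 \<le> k" "k + 2 \<le> n"
    and na: "nonadjacent n A" and dp: "\<forall>i\<in>{1..n}. decperm_pi n I i = sigmaA n A (pi_top k n) i"
  shows "sparse_paving n k (positroid_bases n k I)"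
proof -
  have IF: "\<forall>t\<in>{1..n}. I t = FF n k A t" by (rule recover[OF gn na k dp])
  have A: "A \<subseteq> {1..n}" using na by (simp add: nonadjacent_def)
  define N where "N = Ivl n k ` A"
  define B where "B = positroid_bases n k I"
  have B: "B = {J. J \<subseteq> {1..n} \<and> card J = k} - N" unfolding B_def N_def by (rule bases_FF[OF IF A k])
  have Nk: "\<forall>X\<in>N. X \<subseteq> {1..n} \<and> card X = k"
  proof
    fix X assume "X \<in> N"
    then obtain t where t: "t \<in> A" "X = Ivl n k t" by (auto simp: N_def)
    have "t \<in> {1..n}" using t(1) A by blast
    then show "X \<subseteq> {1..n} \<and> card X = k" using t(2) Ivl_sub card_Ivl k by simp
  qed
  have pw: "\<forall>X\<in>N. \<forall>Y\<in>N. X \<noteq> Y \<longrightarrow> card (X \<inter> Y) + 2 \<le> k"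
  proof (intro ballI impI)
    fix X Y assume X: "X \<in> N" and Y: "Y \<in> N" and ne: "X \<noteq> Y"
    obtain s where s: "s \<in> A" "X = Ivl n k s" using X by (auto simp: N_def)
    obtain t where t: "t \<in> A" "Y = Ivl n k t" using Y by (auto simp: N_def)
    have sn: "s \<in> {1..n}" and tn: "t \<in> {1..n}" using s(1) t(1) A by blast+
    have st: "s \<noteq> t" using ne s t by blast
    have "cnext n t \<notin> A" using na t(1) by (simp add: nonadjacent_def)
    then have st2: "s \<noteq> cnext n t" using s(1) by blast
    have "cnext n s \<notin> A" using na s(1) by (simp add: nonadjacent_def)
    then have st3: "t \<noteq> cnext n s" using t(1) by blast
    show "card (X \<inter> Y) + 2 \<le> k" unfolding s(2) t(2) by (rule card_inter[OF tn sn k st st2 st3])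
  qed
  have pav1: "paving n k B" by (rule paving_nb[OF B]) (use k pw in simp_all)
  have kn: "k \<le> n" using k by simp
  have D: "dual_bases n B = {J. J \<subseteq> {1..n} \<and> card J = n - k} - (\<lambda>b. {1..n} - b) ` N"
    by (rule dual_nb[OF B Nk kn])
  have pav2: "paving n (n - k) (dual_bases n B)"
    by (rule paving_nb[OF D]) (use k dual_pw[OF Nk pw] in simp_all)
  show ?thesis using pav1 pav2 unfolding sparse_paving_def B_def by simp
qed

lemma fwd:
  assumes gn: "grassmann_necklace n k I" and k: "2 \<le> k" "k + 2 \<le> n"
    and sp: "sparse_paving n k (positroid_bases n k I)"
  shows "\<exists>A. nonadjacent n A \<and> (\<forall>i\<in>{1..n}. decperm_pi n I i = sigmaA n A (pi_top k n) i)"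
proof -
  define A where "A = {t\<in>{1..n}. I t = Alt n k t}"
  have IF: "\<forall>t\<in>{1..n}. I t = FF n k A t"
  proof
    fix t assume t: "t \<in> {1..n}"
    show "I t = FF n k A t"
    proof (cases "t \<in> A")
      case True then show ?thesis by (simp add: A_def FF_def)
    next
      case False
      then have "I t \<noteq> Alt n k t" using t by (simp add: A_def)
      then have "I t = Ivl n k t" using shape[OF gn sp k t] by blast
      then show ?thesis using False by (simp add: FF_def)
    qed
  qed
  have noAA: "cnext n t \<notin> A" if t: "t \<in> A" for t
  proof
    assume nA: "cnext n t \<in> A"
    have tn: "t \<in> {1..n}" using t by (simp add: A_def)
    have e1: "I t = Alt n k t" using t by (simp add: A_def)
    have e2: "I (cnext n t) = Alt n k (cnext n t)" using nA by (simp add: A_def)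
    have tI: "t \<in> I t" using e1 t_in_Alt[OF tn k(1)] by simp
    obtain j where "I (cnext n t) = (I t - {t}) \<union> {j}" using gn_at(3)[OF gn tn tI] by blast
    then have "Alt n k (cnext n t) = (Alt n k t - {t}) \<union> {j}" using e1 e2 by simp
    then show False using step_d[OF tn k] by blast
  qed
  have na: "nonadjacent n A"
    unfolding nonadjacent_def
  proof (intro conjI ballI)
    show "A \<subseteq> {1..n}" by (auto simp: A_def)
  next
    fix i assume i: "i \<in> A"
    show "cnext n i \<notin> A" by (rule noAA[OF i])
    show "cprev n i \<notin> A"
    proof
      assume p: "cprev n i \<in> A"
      have "i \<in> {1..n}" using i by (simp add: A_def)
      then have "cnext n (cprev n i) = i" by (rule cnext_cprev)
      then show False using noAA[OF p] i by simp
    qed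
  qed
  have dp: "\<forall>i\<in>{1..n}. decperm_pi n I i = sigmaA n A (pi_top k n) i"
  proof
    fix t assume t: "t \<in> {1..n}"
    have tI: "t \<in> I t" using IF t t_in_FF[OF t k(1)] by simp
    have fin: "finite (I t)" by (rule finite_subset[OF gn_at(1)[OF gn t]]) simp
    have cc: "card (I (cnext n t)) = card (I t)" using gn_at(2)[OF gn t] gn_at(2)[OF gn cnext_in[OF t]] by simp
    have "I (cnext n t) = FF n k A (cnext n t)" using IF cnext_in[OF t] by blast
    also have "\<dots> = (FF n k A t - {t}) \<union> {sigmaA n A (pi_top k n) t}" by (rule F_step[OF na t k])
    also have "\<dots> = (I t - {t}) \<union> {sigmaA n A (pi_top k n) t}" using IF t by simp
    finally have e: "I (cnext n t) = (I t - {t}) \<union> {sigmaA n A (pi_top k n) t}" .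
    show "decperm_pi n I t = sigmaA n A (pi_top k n) t" by (rule decperm_eq[OF tI fin cc e])
  qed
  show ?thesis using na dp by blast
qed

theorem theorem4p2:
  fixes n k :: nat and I :: "nat \<Rightarrow> nat set"
  assumes "2 \<le> k" and "k + 2 \<le> n"
    and "grassmann_necklace n k I"
  shows "(sparse_paving n k (positroid_bases n k I) \<longleftrightarrow>
            (\<exists>A. nonadjacent n A \<and>
                 (\<forall>i \<in> {1..n}. decperm_pi n I i = sigmaA n A (pi_top k n) i)))
         \<and> (sparse_paving n k (positroid_bases n k I) \<longrightarrow>
            (\<forall>i \<in> {1..n}. decperm_pi n I i \<noteq> i))"
proof (intro conjI impI iffI)
  assume "sparse_paving n k (positroid_bases n k I)"
  then show "\<exists>A. nonadjacent n A \<and> (\<forall>i \<in> {1..n}. decperm_pi n I i = sigmaA n A (pi_top k n) i)"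
    using fwd[OF assms(3) assms(1,2)] by blast
next
  assume "\<exists>A. nonadjacent n A \<and> (\<forall>i \<in> {1..n}. decperm_pi n I i = sigmaA n A (pi_top k n) i)"
  then obtain A where "nonadjacent n A" "\<forall>i \<in> {1..n}. decperm_pi n I i = sigmaA n A (pi_top k n) i" by blast
  then show "sparse_paving n k (positroid_bases n k I)" using bwd[OF assms(3) assms(1,2)] by blast
next
  assume "sparse_paving n k (positroid_bases n k I)"
  then obtain A where A: "nonadjacent n A" "\<forall>i \<in> {1..n}. decperm_pi n I i = sigmaA n A (pi_top k n) i"
    using fwd[OF assms(3) assms(1,2)] by blast
  show "\<forall>i \<in> {1..n}. decperm_pi n I i \<noteq> i"
  proof
    fix i assume i: "i \<in> {1..n}"
    then show "decperm_pi n I i \<noteq> i" using A(2) sig_ne[OF i assms(1,2)] by simp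
  qed
qed

end
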